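(* Let $\nu\in A_2$. Then $\mathcal W_\nu(\mathbb R^n)\subset\mathrm{VMO}_\nu(\mathbb R^n)$.
   Context: $A_2$: weights $w$ with $\sup_Q(\frac1{|Q|}\int_Qw)(\frac1{|Q|}\int_Qw^{-1})<\infty$; $w(E)=\int_Ew$. $\mathrm{VMO}_\nu(\mathbb R^n)$: $b\in L^1_{loc}$ with $\sup_B\frac1{\nu(B)}\int_B|b-\langle b\rangle_B|<\infty$ over balls, this quantity tending to $0$ uniformly as the radius $\to0$, as the radius $\to\infty$, and for $B\subset\mathbb R^n\setminus B(x_0,a)$ as $a\to\infty$ ($x_0$ fixed). $\mathcal D$ is the standard dyadic system, $cQ$ the concentric dilate. $\ell^{n,\infty}$: sequences with $\sup_kk^{1/n}a_k^*<\infty$. $\mathcal W_\nu(\mathbb R^n)$: $b\in L^1_{loc}$ such that $\big\{\frac1{\nu(20\sqrt nQ)}\int_{20\sqrt nQ}|b-\langle b\rangle_{20\sqrt nQ}|\big\}_{Q\in\mathcal D}\in\ell^{n,\infty}$. *)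

theory Defs
  imports "HOL-Analysis.Analysis"
begin

definition cube :: "real^'n \<Rightarrow> real \<Rightarrow> (real^'n) set" where
  "cube c l = {x. \<forall>i. \<bar>x$i - c$i\<bar> < l / 2}"

definition wmeas :: "(real^'n \<Rightarrow> real) \<Rightarrow> (real^'n) set \<Rightarrow> real" where
  "wmeas w E = (LINT x:E|lebesgue. w x)"

definition avg :: "(real^'n) set \<Rightarrow> (real^'n \<Rightarrow> real) \<Rightarrow> real" where
  "avg S f = (LINT x:S|lebesgue. f x) / measure lebesgue S"

definition A2 :: "(real^'n \<Rightarrow> real) \<Rightarrow> bool" where
  "A2 w \<longleftrightarrow> (AE x in lebesgue. w x > 0) \<and>
     (\<forall>c l. l > 0 \<longrightarrow> set_integrable lebesgue (cube c l) w
                   \<and> set_integrable lebesgue (cube c l) (\<lambda>x. 1 / w x)) \<and>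
     (\<exists>C. \<forall>c l. l > 0 \<longrightarrow> avg (cube c l) w * avg (cube c l) (\<lambda>x. 1 / w x) \<le> C)"

definition loc_int :: "(real^'n \<Rightarrow> real) \<Rightarrow> bool" where
  "loc_int b \<longleftrightarrow> (\<forall>x r. set_integrable lebesgue (cball x r) b)"

definition osc :: "(real^'n \<Rightarrow> real) \<Rightarrow> (real^'n) set \<Rightarrow> (real^'n \<Rightarrow> real) \<Rightarrow> real" where
  "osc \<nu> S b = (1 / wmeas \<nu> S) * (LINT x:S|lebesgue. \<bar>b x - avg S b\<bar>)"

definition VMO :: "(real^'n \<Rightarrow> real) \<Rightarrow> (real^'n \<Rightarrow> real) set" where
  "VMO \<nu> = {b. loc_int b \<and>
     (\<exists>C. \<forall>x r. r > 0 \<longrightarrow> osc \<nu> (ball x r) b \<le> C) \<and>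
     (\<forall>\<epsilon>>0. \<exists>\<delta>>0. \<forall>x r. 0 < r \<and> r < \<delta> \<longrightarrow> osc \<nu> (ball x r) b < \<epsilon>) \<and>
     (\<forall>\<epsilon>>0. \<exists>R. \<forall>x r. r > R \<longrightarrow> osc \<nu> (ball x r) b < \<epsilon>) \<and>
     (\<forall>\<epsilon>>0. \<exists>a. \<forall>x r. r > 0 \<and> ball x r \<subseteq> - ball 0 a \<longrightarrow> osc \<nu> (ball x r) b < \<epsilon>)}"

text \<open>Dyadic cube 2^{-k}([0,1)^n + m), k integer, m integer vector: centre and side length.\<close>
definition dyad_side :: "int \<Rightarrow> real" where
  "dyad_side k = 2 powr (- real_of_int k)"

definition dyad_centre :: "int \<Rightarrow> int^'n \<Rightarrow> real^'n" where
  "dyad_centre k m = (\<chi> i. (real_of_int (m$i) + 1/2) * dyad_side k)"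

definition dyad_dilate :: "real \<Rightarrow> int \<Rightarrow> int^'n \<Rightarrow> (real^'n) set" where
  "dyad_dilate c k m = cube (dyad_centre k m) (c * dyad_side k)"

definition decr_rearr :: "('i \<Rightarrow> real) \<Rightarrow> nat \<Rightarrow> real" where
  "decr_rearr a k = Inf {t. t \<ge> 0 \<and> finite {i. \<bar>a i\<bar> > t} \<and> card {i. \<bar>a i\<bar> > t} < k}"

definition weak_l :: "nat \<Rightarrow> ('i \<Rightarrow> real) \<Rightarrow> bool" where
  "weak_l p a \<longleftrightarrow>
     (\<forall>k\<ge>1. {t. t \<ge> 0 \<and> finite {i. \<bar>a i\<bar> > t} \<and> card {i. \<bar>a i\<bar> > t} < k} \<noteq> {}) \<and>
     (\<exists>C. \<forall>k\<ge>1. real k powr (1 / real p) * decr_rearr a k \<le> C)"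

definition W_space :: "(real^'n \<Rightarrow> real) \<Rightarrow> (real^'n \<Rightarrow> real) set" where
  "W_space \<nu> = {b. loc_int b \<and>
     weak_l CARD('n)
       (\<lambda>(k::int, m::int^'n). osc \<nu> (dyad_dilate (20 * sqrt (real CARD('n))) k m) b)}"

end

theory Submission
  imports Defs
begin

lemma cube_box: "cube c l = box (c - (\<chi> i. l/2)) (c + (\<chi> i. l/2))"
  apply (intro set_eqI) apply (simp add: cube_def mem_box_cart) apply (intro iff_allI allI) by (smt (verit) field_sum_of_halves)
lemma cube_measure: fixes c :: "real^'n" assumes "l > 0" shows "measure lebesgue (cube c l) = l ^ CARD('n)"
proof -
  let ?a = "c - (\<chi> i. l/2)" and ?b = "c + (\<chi> i. l/2)"
  have "measure lebesgue (cube c l) = measure lborel (box ?a ?b)"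
    by (simp add: cube_box measure_completion)
  also have "\<dots> = measure lborel (cbox ?a ?b)"
    unfolding measure_lborel_box_eq measure_lborel_cbox_eq ..
  also have "\<dots> = prod (\<lambda>i. ?b$i - ?a$i) UNIV"
    by (rule content_cbox_cart) (use assms in \<open>auto simp: interval_eq_empty_cart\<close>)
  also have "\<dots> = l ^ CARD('n)" by simp
  finally show ?thesis .
qed


lemma real_amgm_aux:
  fixes m A B :: real
  assumes "m \<ge> 0" "A \<ge> 0" "B \<ge> 0" and H: "\<And>t. t > 0 \<Longrightarrow> 2 * m \<le> t * A + B / t"
  shows "m^2 \<le> A * B"
proof (cases "m = 0")
  case True then show ?thesis using assms by simp
next
  case False
  hence m: "m > 0" using assms by simp
  show ?thesis
  proof (cases "A = 0")
    case True
    have "2 * m \<le> (B+1)/m * A + B / ((B+1)/m)" using H[of "(B+1)/m"] m assms by simp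
    also have "\<dots> = B * m / (B+1)" using True m by (simp add: field_simps)
    also have "\<dots> < m" using m assms by (simp add: field_simps)
    finally show ?thesis using m by simp
  next
    case False
    hence A: "A > 0" using assms by simp
    have "2 * m \<le> m / A * A + B / (m / A)" using H[of "m/A"] m A by simp
    hence "m \<le> A * B / m" using A m by (simp add: field_simps)
    thus ?thesis using m by (simp add: field_simps power2_eq_square)
  qed
qed

lemma set_int_nonneg:
  fixes f :: "_ \<Rightarrow> real"
  assumes "AE x in M. x \<in> A \<longrightarrow> 0 \<le> f x"
  shows "0 \<le> (LINT x:A|M. f x)"
  unfolding set_lebesgue_integral_def
  by (rule integral_nonneg_AE) (use assms in \<open>auto elim!: eventually_mono simp: indicator_def\<close>)

lemma set_int_mono_set:
  fixes f :: "_ \<Rightarrow> real"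
  assumes "A \<in> sets M" "A \<subseteq> B" "set_integrable M B f" "AE x in M. x \<in> B \<longrightarrow> 0 \<le> f x"
  shows "(LINT x:A|M. f x) \<le> (LINT x:B|M. f x)"
proof -
  have iA: "set_integrable M A f" by (rule set_integrable_subset[OF assms(3,1,2)])
  show ?thesis unfolding set_lebesgue_integral_def
    apply (rule integral_mono_AE)
    using iA assms(3) apply (simp_all add: set_integrable_def)
    using assms(4) apply (rule eventually_mono)
    using assms(2) by (auto simp: indicator_def)
qed

lemma amgm_int:
  fixes w :: "'a \<Rightarrow> real"
  assumes S: "S \<in> sets M" "emeasure M S < \<infinity>"
    and iw: "set_integrable M S w" and iv: "set_integrable M S (\<lambda>x. 1 / w x)"
    and pos: "AE x in M. w x > 0"
  shows "(measure M S)^2 \<le> (LINT x:S|M. w x) * (LINT x:S|M. 1 / w x)"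
proof (rule real_amgm_aux)
  show "0 \<le> measure M S" by simp
  show "0 \<le> (LINT x:S|M. w x)" by (rule set_int_nonneg) (use pos in \<open>auto elim: eventually_mono\<close>)
  show "0 \<le> (LINT x:S|M. 1 / w x)" by (rule set_int_nonneg) (use pos in \<open>auto elim: eventually_mono\<close>)
  fix t :: real assume t: "t > 0"
  have ic: "set_integrable M S (\<lambda>x. 2::real)"
    unfolding set_integrable_def using S
    by (intro integrable_scaleR_left) (simp add: integrable_indicator_iff sets.Int_space_eq2)
  have "2 * measure M S = (LINT x:S|M. 2)" using S by (simp add: set_integral_const)
  also have "\<dots> \<le> (LINT x:S|M. t * w x + (1 / w x) / t)"
  proof (rule set_integral_mono_AE)
    show "set_integrable M S (\<lambda>x. t * w x + 1 / w x / t)"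
    proof (rule set_integral_add(1))
      show "set_integrable M S (\<lambda>x. 1 / w x / t)" by (rule set_integrable_divide) (rule iv)
    qed (use iw in auto)
    show "AE x\<in>S in M. 2 \<le> t * w x + 1 / w x / t"
      using pos
    proof (rule eventually_mono, intro impI)
      fix x assume wx: "0 < w x"
      have "0 \<le> (t * w x - 1)^2" by simp
      hence "2 * (t * w x) \<le> (t * w x)^2 + 1" by (simp add: power2_eq_square algebra_simps)
      thus "2 \<le> t * w x + 1 / w x / t" using wx t by (simp add: field_simps power2_eq_square)
    qed
  qed (rule ic)
  also have "\<dots> = t * (LINT x:S|M. w x) + (LINT x:S|M. 1 / w x) / t"
  proof -
    have iv1: "set_integrable M S (\<lambda>x. 1 / w x / t)" by (rule set_integrable_divide) (rule iv)
    have iw1: "set_integrable M S (\<lambda>x. t * w x)" by (rule set_integrable_mult_right) (rule iw)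
    show ?thesis by (simp only: set_integral_add(2)[OF iw1 iv1] set_integral_mult_right set_integral_divide_zero)
  qed
  finally show "2 * measure M S \<le> t * (LINT x:S|M. w x) + (LINT x:S|M. 1 / w x) / t" .
qed

lemma osc_aux:
  fixes b :: "'a \<Rightarrow> real"
  assumes S: "S \<in> sets M" "emeasure M S < \<infinity>" "measure M S > 0"
    and ib: "set_integrable M S b"
  shows "(LINT x:S|M. \<bar>b x - (LINT y:S|M. b y) / measure M S\<bar>) \<le> 2 * (LINT x:S|M. \<bar>b x - c\<bar>)"
proof -
  let ?m = "measure M S" and ?I = "(LINT y:S|M. b y)"
  let ?a = "?I / ?m"
  have ic: "\<And>c. set_integrable M S (\<lambda>x. c::real)"
    unfolding set_integrable_def using S
    by (intro integrable_scaleR_left) (simp add: integrable_indicator_iff sets.Int_space_eq2)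
  have ibc: "set_integrable M S (\<lambda>x. \<bar>b x - c\<bar>)"
    using ib ic by (intro set_integrable_abs set_integral_diff(1))
  have iba: "set_integrable M S (\<lambda>x. \<bar>b x - ?a\<bar>)"
    using ib ic by (intro set_integrable_abs set_integral_diff(1))
  have "(LINT x:S|M. b x - c) = ?I - ?m * c"
    using ib ic S by (simp add: set_integral_diff(2) set_integral_const)
  hence "\<bar>?I - ?m * c\<bar> \<le> (LINT x:S|M. \<bar>b x - c\<bar>)"
    using set_integral_norm_bound[of M S "\<lambda>x. b x - c"] ib ic by (simp add: set_integral_diff(1))
  hence key: "?m * \<bar>c - ?a\<bar> \<le> (LINT x:S|M. \<bar>b x - c\<bar>)"
  proof -
    have "?m * \<bar>c - ?a\<bar> = \<bar>?m * c - ?I\<bar>" using S(3) by (simp add: abs_mult[symmetric] field_simps)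
    thus ?thesis using \<open>\<bar>?I - ?m * c\<bar> \<le> _\<close> by (simp add: abs_minus_commute)
  qed
  have "(LINT x:S|M. \<bar>b x - ?a\<bar>) \<le> (LINT x:S|M. \<bar>b x - c\<bar> + \<bar>c - ?a\<bar>)"
    by (rule set_integral_mono) (use ibc ic iba in \<open>auto intro: set_integral_add(1)\<close>)
  also have "\<dots> = (LINT x:S|M. \<bar>b x - c\<bar>) + ?m * \<bar>c - ?a\<bar>"
    using ibc ic S by (simp add: set_integral_add(2) set_integral_const)
  finally show ?thesis using key by simp
qed


lemma cube_sub_ball:
  fixes x :: "real^'n" assumes r: "r > 0"
  shows "cube x (r / real CARD('n)) \<subseteq> ball x r"
proof
  fix y assume y: "y \<in> cube x (r / real CARD('n))"
  have "norm (x - y) \<le> (\<Sum>i\<in>UNIV. \<bar>(x - y)$i\<bar>)" by (rule norm_le_l1_cart)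
  also have "\<dots> \<le> (\<Sum>i\<in>(UNIV::'n set). r / real CARD('n) / 2)"
    using y unfolding cube_def by (intro sum_mono) (auto simp: abs_minus_commute less_imp_le)
  also have "\<dots> = r / 2" by simp
  also have "\<dots> < r" using r by simp
  finally show "y \<in> ball x r" by (simp add: dist_norm)
qed

lemma dyad_side_pos: "dyad_side k > 0" unfolding dyad_side_def by simp

lemma dyad_side_less_iff: "dyad_side k1 < dyad_side k2 \<longleftrightarrow> k2 < k1"
  unfolding dyad_side_def by simp

lemma exists_scale: assumes r: "r > 0" shows "\<exists>k. r \<le> dyad_side k \<and> dyad_side k < 2 * r"
proof -
  let ?k = "- \<lceil>log 2 r\<rceil>"
  have "dyad_side ?k = 2 powr (real_of_int \<lceil>log 2 r\<rceil>)" unfolding dyad_side_def by simp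
  moreover have "r = 2 powr (log 2 r)" using r by simp
  moreover have "2 powr (log 2 r) \<le> 2 powr (real_of_int \<lceil>log 2 r\<rceil>)"
    by (intro powr_mono) auto
  moreover have "2 powr (real_of_int \<lceil>log 2 r\<rceil>) < 2 powr (log 2 r + 1)"
    by (intro powr_less_mono) linarith+
  moreover have "2 powr (log 2 r + 1) = 2 * r" using r by (simp add: powr_add)
  ultimately show ?thesis by (intro exI[of _ ?k]) auto
qed

lemma ball_sub_dilate:
  fixes x :: "real^'n" assumes r: "r > 0" and rs: "r \<le> dyad_side k"
  shows "ball x r \<subseteq> dyad_dilate (20 * sqrt (real CARD('n))) k (\<chi> i. \<lfloor>x$i / dyad_side k\<rfloor>)"
proof
  fix y assume y: "y \<in> ball x r"
  let ?s = "dyad_side k"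
  have s: "?s > 0" by (rule dyad_side_pos)
  have sq: "sqrt (real CARD('n)) \<ge> 1" by simp
  show "y \<in> dyad_dilate (20 * sqrt (real CARD('n))) k (\<chi> i. \<lfloor>x$i / ?s\<rfloor>)"
    unfolding dyad_dilate_def cube_def dyad_centre_def
  proof (intro CollectI allI)
    fix i
    have "\<bar>(y - x)$i\<bar> \<le> norm (y - x)" by (rule component_le_norm_cart)
    also have "\<dots> < r" using y by (simp add: dist_norm norm_minus_commute)
    finally have yi: "\<bar>y$i - x$i\<bar> < ?s" using rs by simp
    let ?f = "\<lfloor>x$i / ?s\<rfloor>"
    have f1: "real_of_int ?f \<le> x$i / ?s" by linarith
    have f2: "x$i / ?s < real_of_int ?f + 1" by linarith
    have g1: "real_of_int ?f * ?s \<le> x$i" using f1 pos_le_divide_eq[OF s] by blast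
    have g2: "x$i < (real_of_int ?f + 1) * ?s" using f2 pos_divide_less_eq[OF s] by blast
    have "\<bar>y$i - (real_of_int ?f + 1/2) * ?s\<bar> < 2 * ?s"
      using yi g1 g2 by (simp add: algebra_simps abs_less_iff)
    also have "\<dots> \<le> 20 * sqrt (real CARD('n)) * ?s / 2"
    proof -
      have "2 * ?s \<le> (10 * sqrt (real CARD('n))) * ?s" using sq s by (intro mult_right_mono) linarith+
      thus ?thesis by simp
    qed
    finally show "\<bar>y $ i - (\<chi> i. (real_of_int ((\<chi> i. \<lfloor>x $ i / ?s\<rfloor>) $ i) + 1 / 2) * ?s) $ i\<bar>
        < 20 * sqrt (real CARD('n)) * ?s / 2" by simp
  qed
qed


lemma set_integrable_const_fin:
  assumes "S \<in> fmeasurable M" shows "set_integrable M S (\<lambda>x. c::real)"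
  unfolding set_integrable_def using assms
  by (intro integrable_scaleR_left) (simp add: integrable_indicator_iff sets.Int_space_eq2 fmeasurable_def)

lemma osc_compare:
  fixes \<nu> b :: "'a \<Rightarrow> real"
  assumes pos: "AE x in M. \<nu> x > 0"
    and sub: "Q2 \<subseteq> B" "B \<subseteq> Q1"
    and fm: "Q2 \<in> fmeasurable M" "B \<in> fmeasurable M" "Q1 \<in> fmeasurable M"
    and iv: "set_integrable M Q1 \<nu>" and isg: "set_integrable M Q1 (\<lambda>x. 1 / \<nu> x)"
    and ib: "set_integrable M Q1 b"
    and m2: "measure M Q2 > 0"
    and A: "(LINT x:Q1|M. \<nu> x) / measure M Q1 * ((LINT x:Q1|M. 1 / \<nu> x) / measure M Q1) \<le> C"
  shows "(1 / (LINT x:B|M. \<nu> x)) * (LINT x:B|M. \<bar>b x - (LINT y:B|M. b y) / measure M B\<bar>)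
     \<le> 2 * C * (measure M Q1 / measure M Q2)^2 *
       ((1 / (LINT x:Q1|M. \<nu> x)) * (LINT x:Q1|M. \<bar>b x - (LINT y:Q1|M. b y) / measure M Q1\<bar>))"
proof -
  have sQ2: "Q2 \<in> sets M" "emeasure M Q2 < \<infinity>" using fm(1) by (auto simp: fmeasurable_def)
  have sB: "B \<in> sets M" "emeasure M B < \<infinity>" using fm(2) by (auto simp: fmeasurable_def)
  have sQ1: "Q1 \<in> sets M" "emeasure M Q1 < \<infinity>" using fm(3) by (auto simp: fmeasurable_def)
  have Q21: "Q2 \<subseteq> Q1" using sub by auto
  have ivB: "set_integrable M B \<nu>" using set_integrable_subset[OF iv sB(1) sub(2)] .
  have iv2: "set_integrable M Q2 \<nu>" using set_integrable_subset[OF iv sQ2(1) Q21] .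
  have is2: "set_integrable M Q2 (\<lambda>x. 1 / \<nu> x)" using set_integrable_subset[OF isg sQ2(1) Q21] .
  have ibB: "set_integrable M B b" using set_integrable_subset[OF ib sB(1) sub(2)] .
  have nn: "AE x in M. x \<in> Q1 \<longrightarrow> 0 \<le> \<nu> x" using pos by (auto elim: eventually_mono)
  have nns: "AE x in M. x \<in> Q1 \<longrightarrow> 0 \<le> 1 / \<nu> x" using pos by (auto elim: eventually_mono)
  define v1 where "v1 = (LINT x:Q1|M. \<nu> x)"
  define vB where "vB = (LINT x:B|M. \<nu> x)"
  define v2 where "v2 = (LINT x:Q2|M. \<nu> x)"
  define s1 where "s1 = (LINT x:Q1|M. 1 / \<nu> x)"
  define s2 where "s2 = (LINT x:Q2|M. 1 / \<nu> x)"
  define m1 where "m1 = measure M Q1"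
  define m2' where "m2' = measure M Q2"
  have v2B: "v2 \<le> vB" unfolding v2_def vB_def
    by (rule set_int_mono_set[OF sQ2(1) sub(1) ivB]) (use nn sub in auto)
  have vB1: "vB \<le> v1" unfolding v1_def vB_def
    by (rule set_int_mono_set[OF sB(1) sub(2) iv nn])
  have s21: "s2 \<le> s1" unfolding s1_def s2_def
    by (rule set_int_mono_set[OF sQ2(1) Q21 isg nns])
  have s2nn: "0 \<le> s2" unfolding s2_def by (rule set_int_nonneg) (use nns Q21 in auto)
  have v2nn: "0 \<le> v2" unfolding v2_def by (rule set_int_nonneg) (use nn Q21 in auto)
  have amgm: "m2'^2 \<le> v2 * s2" unfolding m2'_def v2_def s2_def
    by (rule amgm_int[OF sQ2 iv2 is2 pos])
  have m2p: "m2' > 0" using m2 by (simp add: m2'_def)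
  have m21: "m2' \<le> m1" unfolding m1_def m2'_def by (rule measure_mono_fmeasurable[OF Q21 sQ2(1) fm(3)])
  have m1p: "m1 > 0" using m2p m21 by simp
  have "0 < m2'^2" using m2p by simp
  hence "0 < v2 * s2" using amgm by linarith
  hence v2p: "v2 > 0" and s2p: "s2 > 0" using v2nn s2nn by (auto simp: zero_less_mult_iff)
  have vBp: "vB > 0" using v2p v2B by simp
  have v1p: "v1 > 0" using vBp vB1 by simp
  have s1p: "s1 > 0" using s2p s21 by simp
  have A': "v1 * s1 \<le> C * m1^2"
    using A m1p unfolding v1_def[symmetric] s1_def[symmetric] m1_def[symmetric]
    by (simp add: field_simps power2_eq_square)
  have Cp: "C > 0"
  proof -
    have "0 < v1 * s1" using v1p s1p by simp
    hence "0 < C * m1^2" using A' by linarith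
    thus ?thesis using m1p by (simp add: zero_less_mult_iff)
  qed
  have "v1 * m2'^2 \<le> v1 * (v2 * s2)" using amgm v1p by (intro mult_left_mono) auto
  also have "\<dots> \<le> v1 * (v2 * s1)" using s21 v1p v2p by (intro mult_left_mono) auto
  also have "\<dots> = v2 * (v1 * s1)" by simp
  also have "\<dots> \<le> v2 * (C * m1^2)" using A' v2p by (intro mult_left_mono) auto
  finally have "v1 * m2'^2 \<le> v2 * (C * m1^2)" .
  hence v1bound: "v1 \<le> C * (m1 / m2')^2 * vB"
  proof -
    assume h: "v1 * m2'^2 \<le> v2 * (C * m1^2)"
    have "v1 \<le> C * (m1 / m2')^2 * v2" using h m2p by (simp add: field_simps power2_eq_square)
    also have "\<dots> \<le> C * (m1 / m2')^2 * vB" using v2B Cp by (intro mult_left_mono) auto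
    finally show ?thesis .
  qed
  define aQ where "aQ = (LINT y:Q1|M. b y) / m1"
  have ic: "set_integrable M Q1 (\<lambda>x. aQ)" by (rule set_integrable_const_fin[OF fm(3)])
  have iabs: "set_integrable M Q1 (\<lambda>x. \<bar>b x - aQ\<bar>)"
    using ib ic by (intro set_integrable_abs set_integral_diff(1))
  have mB: "measure M B > 0"
    using m2p measure_mono_fmeasurable[OF sub(1) sQ2(1) fm(2)] by (simp add: m2'_def)
  have "(LINT x:B|M. \<bar>b x - (LINT y:B|M. b y) / measure M B\<bar>) \<le> 2 * (LINT x:B|M. \<bar>b x - aQ\<bar>)"
    by (rule osc_aux[OF sB mB ibB])
  also have "\<dots> \<le> 2 * (LINT x:Q1|M. \<bar>b x - aQ\<bar>)"
    using set_int_mono_set[OF sB(1) sub(2) iabs] by simp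
  finally have osc1: "(LINT x:B|M. \<bar>b x - (LINT y:B|M. b y) / measure M B\<bar>) \<le> 2 * (LINT x:Q1|M. \<bar>b x - aQ\<bar>)" .
  have I1nn: "0 \<le> (LINT x:Q1|M. \<bar>b x - aQ\<bar>)" by (rule set_int_nonneg) auto
  have "(1 / vB) * (LINT x:B|M. \<bar>b x - (LINT y:B|M. b y) / measure M B\<bar>) \<le> (1 / vB) * (2 * (LINT x:Q1|M. \<bar>b x - aQ\<bar>))"
    using osc1 vBp by (intro mult_left_mono) auto
  also have "\<dots> = 2 * (v1 / vB) * ((1 / v1) * (LINT x:Q1|M. \<bar>b x - aQ\<bar>))" using v1p vBp by simp
  also have "\<dots> \<le> 2 * (C * (m1 / m2')^2) * ((1 / v1) * (LINT x:Q1|M. \<bar>b x - aQ\<bar>))"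
  proof (intro mult_left_mono mult_right_mono)
    show "v1 / vB \<le> C * (m1 / m2')\<^sup>2" using v1bound vBp by (simp add: field_simps)
    show "0 \<le> 1 / v1 * (LINT x:Q1|M. \<bar>b x - aQ\<bar>)" using v1p I1nn by simp
  qed auto
  finally show ?thesis unfolding vB_def v1_def aQ_def m1_def m2'_def by (simp add: mult.assoc)
qed


lemma weak_bounded:
  assumes "weak_l p a" shows "\<exists>M. \<forall>i. \<bar>a i\<bar> \<le> M"
proof -
  from assms obtain t where t: "t \<ge> 0" "finite {i. \<bar>a i\<bar> > t}" "card {i. \<bar>a i\<bar> > t} < 1"
    unfolding weak_l_def by fastforce
  hence "{i. \<bar>a i\<bar> > t} = {}" by simp
  hence "\<forall>i. \<bar>a i\<bar> \<le> t" by (auto simp: not_less)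
  thus ?thesis by blast
qed

lemma weak_finite:
  assumes w: "weak_l p a" and p: "p \<ge> 1" and e: "\<epsilon> > 0"
  shows "finite {i. \<bar>a i\<bar> > \<epsilon>}"
proof -
  from w obtain C where C: "\<And>k. k \<ge> 1 \<Longrightarrow> real k powr (1 / real p) * decr_rearr a k \<le> C"
    unfolding weak_l_def by blast
  define X where "X = (\<bar>C\<bar> + 1) / \<epsilon>"
  have Xp: "X > 0" unfolding X_def using e by simp
  define k where "k = nat \<lceil>X powr real p\<rceil> + 1"
  have k1: "k \<ge> 1" unfolding k_def by simp
  have "X powr real p \<le> real k" unfolding k_def by linarith
  hence "(X powr real p) powr (1 / real p) \<le> real k powr (1 / real p)"
    using Xp by (intro powr_mono2) auto
  moreover have "(X powr real p) powr (1 / real p) = X" using p Xp by (simp add: powr_powr)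
  ultimately have kX: "X \<le> real k powr (1 / real p)" by simp
  define S where "S = {t. t \<ge> 0 \<and> finite {i. \<bar>a i\<bar> > t} \<and> card {i. \<bar>a i\<bar> > t} < k}"
  have Sne: "S \<noteq> {}" using w k1 unfolding weak_l_def S_def by blast
  have d: "decr_rearr a k = Inf S" unfolding decr_rearr_def S_def ..
  have "Inf S < \<epsilon>"
  proof (rule ccontr)
    assume "\<not> Inf S < \<epsilon>"
    hence de: "decr_rearr a k \<ge> \<epsilon>" using d by simp
    have "\<bar>C\<bar> + 1 = X * \<epsilon>" unfolding X_def using e by simp
    also have "\<dots> \<le> real k powr (1 / real p) * decr_rearr a k"
      using kX de Xp e by (intro mult_mono) auto
    also have "\<dots> \<le> C" using C[OF k1] .
    finally show False by simp
  qed
  moreover have "bdd_below S" unfolding S_def by (rule bdd_belowI[of _ 0]) auto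
  ultimately obtain t where t: "t \<in> S" "t < \<epsilon>" using Sne by (meson cInf_lessD)
  hence "finite {i. \<bar>a i\<bar> > t}" unfolding S_def by simp
  moreover have "{i. \<bar>a i\<bar> > \<epsilon>} \<subseteq> {i. \<bar>a i\<bar> > t}" using t by auto
  ultimately show ?thesis by (rule finite_subset[rotated])
qed


lemma cube_lmeas: "cube c l \<in> lmeasurable" unfolding cube_box by (rule lmeasurable_box)
lemma cube_bounded: "bounded (cube c l)" unfolding cube_box by (rule bounded_box)

lemma loc_int_bounded:
  assumes "loc_int b" "bounded S" "S \<in> sets lebesgue" shows "set_integrable lebesgue S b"
proof -
  from assms(2) obtain e z where "S \<subseteq> cball z e" unfolding bounded_subset_cball by blast
  thus ?thesis using assms(1,3) unfolding loc_int_def by (blast intro: set_integrable_subset)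
qed

lemma avg_nonneg:
  fixes f :: "real^'n \<Rightarrow> real"
  assumes "AE x in lebesgue. f x \<ge> 0" shows "avg S f \<ge> 0"
  unfolding avg_def by (intro divide_nonneg_nonneg set_int_nonneg) (use assms in \<open>auto elim: eventually_mono\<close>)

lemma osc_nonneg:
  fixes \<nu> :: "real^'n \<Rightarrow> real"
  assumes "AE x in lebesgue. \<nu> x > 0" shows "osc \<nu> S b \<ge> 0"
  unfolding osc_def wmeas_def
  by (intro mult_nonneg_nonneg divide_nonneg_nonneg set_int_nonneg) (use assms in \<open>auto elim: eventually_mono\<close>)

lemma ball_bound:
  fixes \<nu> b :: "real^'n \<Rightarrow> real"
  assumes pos: "AE x in lebesgue. \<nu> x > 0"
   and int: "\<forall>c l. l > 0 \<longrightarrow> set_integrable lebesgue (cube c l) \<nu> \<and> set_integrable lebesgue (cube c l) (\<lambda>x. 1/\<nu> x)"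
   and Cb: "\<forall>c l. l > 0 \<longrightarrow> avg (cube c l) \<nu> * avg (cube c l) (\<lambda>x. 1 / \<nu> x) \<le> C"
   and lb: "loc_int b" and r: "r > 0" and rs: "r \<le> dyad_side k" "dyad_side k < 2 * r"
  shows "osc \<nu> (ball x r) b \<le> 2 * C * ((40 * sqrt (real CARD('n)) * real CARD('n)) ^ CARD('n))^2
     * osc \<nu> (dyad_dilate (20 * sqrt (real CARD('n))) k (\<chi> i. \<lfloor>x$i / dyad_side k\<rfloor>)) b"
proof -
  let ?n = "real CARD('n)"
  let ?s = "dyad_side k"
  let ?c = "20 * sqrt ?n"
  let ?m = "\<chi> i. \<lfloor>x$i / dyad_side k\<rfloor>"
  let ?ctr = "dyad_centre k ?m :: real^'n"
  let ?L = "?c * ?s"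
  let ?Q1 = "dyad_dilate ?c k ?m"
  let ?Q2 = "cube x (r / ?n)"
  let ?R = "(40 * sqrt ?n * ?n) ^ CARD('n)"
  have s: "?s > 0" by (rule dyad_side_pos)
  have np: "?n > 0" by simp
  have Lp: "?L > 0" using s by simp
  have Q1: "?Q1 = cube ?ctr ?L" unfolding dyad_dilate_def ..
  have sub1: "?Q2 \<subseteq> ball x r" by (rule cube_sub_ball[OF r])
  have sub2: "ball x r \<subseteq> ?Q1" by (rule ball_sub_dilate[OF r rs(1)])
  have iv: "set_integrable lebesgue ?Q1 \<nu>" and isg: "set_integrable lebesgue ?Q1 (\<lambda>x. 1 / \<nu> x)"
    using int Lp unfolding Q1 by auto
  have ib: "set_integrable lebesgue ?Q1 b" unfolding Q1
    by (rule loc_int_bounded[OF lb cube_bounded]) (rule fmeasurableD[OF cube_lmeas])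
  have m2: "measure lebesgue ?Q2 = (r / ?n) ^ CARD('n)" by (rule cube_measure) (use r in simp)
  have m1: "measure lebesgue ?Q1 = ?L ^ CARD('n)" unfolding Q1 by (rule cube_measure[OF Lp])
  have m2p: "measure lebesgue ?Q2 > 0" using m2 r by simp
  have A: "(LINT x:?Q1|lebesgue. \<nu> x) / measure lebesgue ?Q1 * ((LINT x:?Q1|lebesgue. 1 / \<nu> x) / measure lebesgue ?Q1) \<le> C"
    using Cb Lp unfolding Q1 avg_def by auto
  have main: "osc \<nu> (ball x r) b \<le> 2 * C * (measure lebesgue ?Q1 / measure lebesgue ?Q2)^2 * osc \<nu> ?Q1 b"
    unfolding osc_def wmeas_def avg_def
    by (rule osc_compare[OF pos sub1 sub2 cube_lmeas lmeasurable_ball _ iv isg ib m2p A])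
      (unfold Q1, rule cube_lmeas)
  have Cnn: "C \<ge> 0"
  proof -
    have "0 \<le> avg (cube 0 1) \<nu> * avg (cube (0::real^'n) 1) (\<lambda>x. 1 / \<nu> x)"
      using pos by (intro mult_nonneg_nonneg avg_nonneg) (auto elim: eventually_mono)
    moreover have "avg (cube 0 1) \<nu> * avg (cube (0::real^'n) 1) (\<lambda>x. 1 / \<nu> x) \<le> C"
      by (rule Cb[rule_format]) simp
    ultimately show ?thesis by linarith
  qed
  have ratio: "measure lebesgue ?Q1 / measure lebesgue ?Q2 = (?L / (r / ?n)) ^ CARD('n)"
    unfolding m1 m2 by (simp add: power_divide power_mult_distrib)
  have "?L / (r / ?n) = ?c * ?s * ?n / r" using np by simp
  also have "\<dots> \<le> ?c * (2 * r) * ?n / r" using rs(2) r np by (intro divide_right_mono mult_right_mono mult_left_mono) auto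
  also have "\<dots> = 40 * sqrt ?n * ?n" using r by simp
  finally have "?L / (r / ?n) \<le> 40 * sqrt ?n * ?n" .
  hence "(?L / (r / ?n)) ^ CARD('n) \<le> ?R" using Lp r np by (intro power_mono) auto
  hence "(measure lebesgue ?Q1 / measure lebesgue ?Q2)^2 \<le> ?R^2"
    unfolding ratio using Lp r np by (intro power_mono) auto
  hence "2 * C * (measure lebesgue ?Q1 / measure lebesgue ?Q2)^2 * osc \<nu> ?Q1 b \<le> 2 * C * ?R^2 * osc \<nu> ?Q1 b"
    using Cnn osc_nonneg[OF pos] by (intro mult_right_mono mult_left_mono) auto
  with main show ?thesis by linarith
qed


theorem lemma6p2:
  fixes \<nu> :: "real^'n \<Rightarrow> real"
  assumes "A2 \<nu>"
  shows "W_space \<nu> \<subseteq> VMO \<nu>"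
proof
  fix b assume "b \<in> W_space \<nu>"
  hence lb: "loc_int b" and wk: "weak_l CARD('n)
       (\<lambda>(k::int, m::int^'n). osc \<nu> (dyad_dilate (20 * sqrt (real CARD('n))) k m) b)"
    unfolding W_space_def by auto
  let ?c = "20 * sqrt (real CARD('n))"
  define a where "a = (\<lambda>(k::int, m::int^'n). osc \<nu> (dyad_dilate ?c k m) b)"
  have wa: "weak_l CARD('n) a" using wk unfolding a_def .
  from assms have pos: "AE x in lebesgue. \<nu> x > 0"
   and int: "\<forall>c l. l > 0 \<longrightarrow> set_integrable lebesgue (cube c l) \<nu> \<and> set_integrable lebesgue (cube c l) (\<lambda>x. 1/\<nu> x)"
    unfolding A2_def by auto
  from assms obtain C where Cb: "\<forall>c l. l > 0 \<longrightarrow> avg (cube c l) \<nu> * avg (cube c l) (\<lambda>x. 1 / \<nu> x) \<le> C"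
    unfolding A2_def by blast
  define K where "K = 2 * C * ((40 * sqrt (real CARD('n)) * real CARD('n)) ^ CARD('n))^2"
  have Cnn: "C \<ge> 0"
  proof -
    have "0 \<le> avg (cube 0 1) \<nu> * avg (cube (0::real^'n) 1) (\<lambda>x. 1 / \<nu> x)"
      using pos by (intro mult_nonneg_nonneg avg_nonneg) (auto elim: eventually_mono)
    moreover have "avg (cube 0 1) \<nu> * avg (cube (0::real^'n) 1) (\<lambda>x. 1 / \<nu> x) \<le> C"
      by (rule Cb[rule_format]) simp
    ultimately show ?thesis by linarith
  qed
  have Knn: "K \<ge> 0" unfolding K_def using Cnn by simp
  define mm where "mm = (\<lambda>(x::real^'n) k. (\<chi> i. \<lfloor>x$i / dyad_side k\<rfloor>) :: int^'n)"
  have key: "\<exists>k. r \<le> dyad_side k \<and> dyad_side k < 2 * r \<and> x \<in> dyad_dilate ?c k (mm x k)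
      \<and> osc \<nu> (ball x r) b \<le> K * a (k, mm x k)" if r: "r > 0" for x r
  proof -
    obtain k where k: "r \<le> dyad_side k" "dyad_side k < 2 * r" using exists_scale[OF r] by blast
    have "x \<in> ball x r" using r by simp
    hence "x \<in> dyad_dilate ?c k (mm x k)" using ball_sub_dilate[OF r k(1), of x] unfolding mm_def by auto
    moreover have "osc \<nu> (ball x r) b \<le> K * a (k, mm x k)"
      using ball_bound[OF pos int Cb lb r k, of x] unfolding K_def a_def mm_def by simp
    ultimately show ?thesis using k by blast
  qed
  have p1: "CARD('n) \<ge> 1" by (simp add: Suc_leI)
  obtain M where M: "\<forall>i. \<bar>a i\<bar> \<le> M" using weak_bounded[OF wa] by blast
  have small: "\<exists>F. finite F \<and> (\<forall>x r k. r > 0 \<longrightarrow> (k, mm x k) \<notin> F \<longrightarrow>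
      osc \<nu> (ball x r) b \<le> K * a (k, mm x k) \<longrightarrow> osc \<nu> (ball x r) b < \<epsilon>)" if e: "\<epsilon> > 0" for \<epsilon>
  proof -
    define e' where "e' = \<epsilon> / (2 * (K + 1))"
    have e'p: "e' > 0" unfolding e'_def using e Knn by simp
    have Ke: "K * e' < \<epsilon>"
    proof -
      have "K * e' \<le> (K + 1) * e'" using e'p by simp
      also have "(K + 1) * e' = \<epsilon> / 2" unfolding e'_def using Knn by (simp add: field_simps)
      finally show ?thesis using e by simp
    qed
    let ?F = "{i. \<bar>a i\<bar> > e'}"
    have "finite ?F" by (rule weak_finite[OF wa p1 e'p])
    moreover have "osc \<nu> (ball x r) b < \<epsilon>" if "(k, mm x k) \<notin> ?F" "osc \<nu> (ball x r) b \<le> K * a (k, mm x k)" for x r k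
    proof -
      have "a (k, mm x k) \<le> e'" using that(1) by auto
      hence "K * a (k, mm x k) \<le> K * e'" using Knn by (intro mult_left_mono) auto
      thus ?thesis using that(2) Ke by linarith
    qed
    ultimately show ?thesis by blast
  qed
  show "b \<in> VMO \<nu>" unfolding VMO_def
  proof (intro CollectI conjI allI impI)
    show "loc_int b" by (rule lb)
    show "\<exists>C. \<forall>x r. r > 0 \<longrightarrow> osc \<nu> (ball x r) b \<le> C"
    proof (intro exI allI impI)
      fix x :: "real^'n" and r :: real assume r: "r > 0"
      obtain k where "osc \<nu> (ball x r) b \<le> K * a (k, mm x k)" using key[OF r] by blast
      also have "\<dots> \<le> K * M" using M Knn by (intro mult_left_mono) (auto simp: abs_le_iff)
      finally show "osc \<nu> (ball x r) b \<le> K * M" .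
    qed
  next
    fix \<epsilon> :: real assume e: "\<epsilon> > 0"
    obtain F where F: "finite F" and Fg: "\<And>x r k. r > 0 \<Longrightarrow> (k, mm x k) \<notin> F \<Longrightarrow>
      osc \<nu> (ball x r) b \<le> K * a (k, mm x k) \<Longrightarrow> osc \<nu> (ball x r) b < \<epsilon>" using small[OF e] by blast
    define kmax where "kmax = Max (insert 0 (fst ` F))"
    have kmax: "\<And>k m. (k, m) \<in> F \<Longrightarrow> k \<le> kmax" unfolding kmax_def using F
      by (intro Max_ge) (auto simp: image_iff intro: bexI[rotated])
    show "\<exists>\<delta>>0. \<forall>x r. 0 < r \<and> r < \<delta> \<longrightarrow> osc \<nu> (ball x r) b < \<epsilon>"
    proof (intro exI[of _ "dyad_side kmax / 2"] conjI allI impI)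
      show "dyad_side kmax / 2 > 0" using dyad_side_pos by simp
      fix x :: "real^'n" and r :: real assume r: "0 < r \<and> r < dyad_side kmax / 2"
      obtain k where k: "dyad_side k < 2 * r" "osc \<nu> (ball x r) b \<le> K * a (k, mm x k)"
        using key[of r x] r by blast
      have "dyad_side k < dyad_side kmax" using k r by simp
      hence "kmax < k" by (simp add: dyad_side_less_iff)
      hence "(k, mm x k) \<notin> F" using kmax by fastforce
      thus "osc \<nu> (ball x r) b < \<epsilon>" using Fg r k by blast
    qed
  next
    fix \<epsilon> :: real assume e: "\<epsilon> > 0"
    obtain F where F: "finite F" and Fg: "\<And>x r k. r > 0 \<Longrightarrow> (k, mm x k) \<notin> F \<Longrightarrow>
      osc \<nu> (ball x r) b \<le> K * a (k, mm x k) \<Longrightarrow> osc \<nu> (ball x r) b < \<epsilon>" using small[OF e] by blast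
    define kmin where "kmin = Min (insert 0 (fst ` F))"
    have kmin: "\<And>k m. (k, m) \<in> F \<Longrightarrow> kmin \<le> k" unfolding kmin_def using F
      by (intro Min_le) (auto simp: image_iff intro: bexI[rotated])
    show "\<exists>R. \<forall>x r. r > R \<longrightarrow> osc \<nu> (ball x r) b < \<epsilon>"
    proof (intro exI[of _ "dyad_side kmin"] allI impI)
      fix x :: "real^'n" and r :: real assume r: "r > dyad_side kmin"
      have rp: "r > 0" using r dyad_side_pos[of kmin] by simp
      obtain k where k: "r \<le> dyad_side k" "osc \<nu> (ball x r) b \<le> K * a (k, mm x k)"
        using key[OF rp, of x] by blast
      have "dyad_side kmin < dyad_side k" using k r by simp
      hence "k < kmin" by (simp add: dyad_side_less_iff)
      hence "(k, mm x k) \<notin> F" using kmin by fastforce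
      thus "osc \<nu> (ball x r) b < \<epsilon>" using Fg rp k by blast
    qed
  next
    fix \<epsilon> :: real assume e: "\<epsilon> > 0"
    obtain F where F: "finite F" and Fg: "\<And>x r k. r > 0 \<Longrightarrow> (k, mm x k) \<notin> F \<Longrightarrow>
      osc \<nu> (ball x r) b \<le> K * a (k, mm x k) \<Longrightarrow> osc \<nu> (ball x r) b < \<epsilon>" using small[OF e] by blast
    have "bounded (\<Union>p\<in>F. dyad_dilate ?c (fst p) (snd p))"
      using F by (auto simp: dyad_dilate_def cube_bounded)
    then obtain R where R: "(\<Union>p\<in>F. dyad_dilate ?c (fst p) (snd p)) \<subseteq> ball 0 R"
      using bounded_subset_ballD by blast
    show "\<exists>a. \<forall>x r. r > 0 \<and> ball x r \<subseteq> - ball 0 a \<longrightarrow> osc \<nu> (ball x r) b < \<epsilon>"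
    proof (intro exI[of _ R] allI impI)
      fix x :: "real^'n" and r :: real assume h: "r > 0 \<and> ball x r \<subseteq> - ball 0 R"
      hence rp: "r > 0" by simp
      have "x \<in> ball x r" using rp by simp
      hence xn: "x \<notin> ball 0 R" using h by blast
      obtain k where k: "x \<in> dyad_dilate ?c k (mm x k)" "osc \<nu> (ball x r) b \<le> K * a (k, mm x k)"
        using key[OF rp, of x] by blast
      have "(k, mm x k) \<notin> F"
      proof
        assume "(k, mm x k) \<in> F"
        hence "x \<in> ball 0 R" using R k(1) by fastforce
        thus False using xn by simp
      qed
      thus "osc \<nu> (ball x r) b < \<epsilon>" using Fg rp k by blast
    qed
  qed
qed

end
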